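(* Let $\phi:\mathbb{Z}^N\curvearrowright X$ be a free action of $\mathbb{Z}^N$ by homeomorphisms on a compact, metrizable, totally disconnected space $X$. Then the transformation groupoid $G_\phi$ is almost finite.
   Context: The transformation groupoid $G_\phi$ is $\mathbb{Z}^N\times X$ with product topology, unit space $\{0\}\times X\cong X$, $(p,x)$ and $(q,y)$ composable iff $x=\phi^q(y)$, product $(p,\phi^q(y))(q,y)=(p+q,y)$, inverse $(p,x)^{-1}=(-p,\phi^p(x))$, source $s(p,x)=x$, range $r(p,x)=\phi^p(x)$. Free means $\phi^p(x)=x$ only if $p=0$. An elementary subgroupoid of an étale groupoid $G$ (with compact totally disconnected unit space) is a compact open subgroupoid $K$ with $K^{(0)}=G^{(0)}$ that is principal ($r(k)=s(k)$ implies $k$ is a unit). $G$ is almost finite if for every compact $C\subset G$ and $\varepsilon>0$ there is an elementary subgroupoid $K$ with $|CKx\setminus Kx|/|K(x)|<\varepsilon$ for all $x\in G^{(0)}$, where $Kx=\{k\in K:s(k)=x\}$, $CKx=\{ck:c\in C,k\in Kx,s(c)=r(k)\}$, $K(x)=r(Kx)$. *)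

theory Defs
  imports "HOL-Analysis.Analysis"
begin

definition totally_disconnected_space :: "'a topology \<Rightarrow> bool" where
  "totally_disconnected_space X \<longleftrightarrow>
     (\<forall>S. connectedin X S \<longrightarrow> (\<exists>a. S \<subseteq> {a}))"

text \<open>Action of Z^N (N = CARD('n)) on the space X by homeomorphisms.\<close>
definition homeo_action :: "'a topology \<Rightarrow> (int ^ 'n \<Rightarrow> 'a \<Rightarrow> 'a) \<Rightarrow> bool" where
  "homeo_action X \<phi> \<longleftrightarrow>
     (\<forall>p. homeomorphic_map X X (\<phi> p)) \<and>
     (\<forall>x\<in>topspace X. \<phi> 0 x = x) \<and>
     (\<forall>p q. \<forall>x\<in>topspace X. \<phi> (p + q) x = \<phi> p (\<phi> q x))"

definition free_action :: "'a topology \<Rightarrow> (int ^ 'n \<Rightarrow> 'a \<Rightarrow> 'a) \<Rightarrow> bool" where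
  "free_action X \<phi> \<longleftrightarrow> (\<forall>p. \<forall>x\<in>topspace X. \<phi> p x = x \<longrightarrow> p = 0)"

text \<open>Transformation groupoid G_phi = Z^N \<times> X with product topology
  (Z^N discrete).  Elements (p,x); source x; range phi^p(x);
  (p, phi^q y)(q,y) = (p+q,y); (p,x)^{-1} = (-p, phi^p x).\<close>
definition tg_top :: "'a topology \<Rightarrow> ((int ^ 'n) \<times> 'a) topology" where
  "tg_top X = prod_topology (discrete_topology UNIV) X"

definition tg_src :: "(int ^ 'n) \<times> 'a \<Rightarrow> 'a" where
  "tg_src g = snd g"

definition tg_rng :: "(int ^ 'n \<Rightarrow> 'a \<Rightarrow> 'a) \<Rightarrow> (int ^ 'n) \<times> 'a \<Rightarrow> 'a" where
  "tg_rng \<phi> g = \<phi> (fst g) (snd g)"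

definition tg_mult :: "(int ^ 'n) \<times> 'a \<Rightarrow> (int ^ 'n) \<times> 'a \<Rightarrow> (int ^ 'n) \<times> 'a" where
  "tg_mult g h = (fst g + fst h, snd h)"

definition tg_inv :: "(int ^ 'n \<Rightarrow> 'a \<Rightarrow> 'a) \<Rightarrow> (int ^ 'n) \<times> 'a \<Rightarrow> (int ^ 'n) \<times> 'a" where
  "tg_inv \<phi> g = (- fst g, \<phi> (fst g) (snd g))"

text \<open>Elementary subgroupoid: compact open subgroupoid containing the whole unit
  space, and principal.\<close>
definition elementary_subgroupoid ::
  "'a topology \<Rightarrow> (int ^ 'n \<Rightarrow> 'a \<Rightarrow> 'a) \<Rightarrow> ((int ^ 'n) \<times> 'a) set \<Rightarrow> bool" where
  "elementary_subgroupoid X \<phi> K \<longleftrightarrow>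
     K \<subseteq> topspace (tg_top X) \<and>
     compactin (tg_top X) K \<and> openin (tg_top X) K \<and>
     (\<forall>x\<in>topspace X. (0, x) \<in> K) \<and>
     (\<forall>g\<in>K. \<forall>h\<in>K. tg_src g = tg_rng \<phi> h \<longrightarrow> tg_mult g h \<in> K) \<and>
     (\<forall>g\<in>K. tg_inv \<phi> g \<in> K) \<and>
     (\<forall>g\<in>K. tg_rng \<phi> g = tg_src g \<longrightarrow> fst g = 0)"

definition fib :: "((int ^ 'n) \<times> 'a) set \<Rightarrow> 'a \<Rightarrow> ((int ^ 'n) \<times> 'a) set" where
  "fib K x = {k \<in> K. tg_src k = x}"

definition prod_fib ::
  "(int ^ 'n \<Rightarrow> 'a \<Rightarrow> 'a) \<Rightarrow> ((int ^ 'n) \<times> 'a) set \<Rightarrow> ((int ^ 'n) \<times> 'a) set \<Rightarrow> 'a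
     \<Rightarrow> ((int ^ 'n) \<times> 'a) set" where
  "prod_fib \<phi> C K x = {tg_mult c k | c k. c \<in> C \<and> k \<in> fib K x \<and> tg_src c = tg_rng \<phi> k}"

definition orbit_class ::
  "(int ^ 'n \<Rightarrow> 'a \<Rightarrow> 'a) \<Rightarrow> ((int ^ 'n) \<times> 'a) set \<Rightarrow> 'a \<Rightarrow> 'a set" where
  "orbit_class \<phi> K x = tg_rng \<phi> ` fib K x"

definition almost_finite_tg :: "'a topology \<Rightarrow> (int ^ 'n \<Rightarrow> 'a \<Rightarrow> 'a) \<Rightarrow> bool" where
  "almost_finite_tg X \<phi> \<longleftrightarrow>
     (\<forall>C (\<epsilon>::real). compactin (tg_top X) C \<and> \<epsilon> > 0 \<longrightarrow>
        (\<exists>K. elementary_subgroupoid X \<phi> K \<and>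
             (\<forall>x\<in>topspace X.
                real (card (prod_fib \<phi> C K x - fib K x)) / real (card (orbit_class \<phi> K x)) < \<epsilon>)))"

end

theory Submission
  imports Defs "HOL-Library.List_Lexorder"
begin

definition bxs :: "int \<Rightarrow> (int^'n) set" where "bxs s = {v. \<forall>i. \<bar>v$i\<bar> \<le> s}"
definition sqn :: "int^'n \<Rightarrow> int" where "sqn v = (\<Sum>i\<in>UNIV. (v$i)^2)"
definition ax :: "'n \<Rightarrow> int \<Rightarrow> int^'n" where "ax i t = (\<chi> j. if j = i then t else 0)"
definition enm :: "'n::finite list" where "enm = (SOME xs. set xs = UNIV)"
definition lst :: "int^'n \<Rightarrow> int list" where "lst v = map (\<lambda>i. v$i) enm"
definition keyle :: "int^'n \<Rightarrow> int^'n \<Rightarrow> bool" where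
 "keyle u w \<longleftrightarrow> sqn u < sqn w \<or> (sqn u = sqn w \<and> lst u \<le> lst w)"

lemma set_enm: "set (enm :: 'n::finite list) = UNIV"
  unfolding enm_def by (rule someI_ex) (simp add: finite_list)

lemma lst_inj: "lst u = lst w \<Longrightarrow> u = w"
  unfolding lst_def by (simp add: vec_eq_iff map_eq_conv set_enm)

lemma map_shift_le: "(map (\<lambda>i. (u - p)$i) xs \<le> map (\<lambda>i. (w - p)$i) xs) \<longleftrightarrow> (map (\<lambda>i. u$i) xs \<le> map (\<lambda>i. w$i) (xs::'n list))"
  for u w p :: "int^'n"
  by (induction xs) auto

lemma lst_shift: "lst (u - p) \<le> lst (w - p) \<longleftrightarrow> lst u \<le> lst w"
  unfolding lst_def by (rule map_shift_le)

lemma keyle_total: "keyle u w \<or> keyle w u"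
  unfolding keyle_def by auto

lemma keyle_antisym: "keyle u w \<Longrightarrow> keyle w u \<Longrightarrow> u = w"
  unfolding keyle_def using lst_inj by fastforce

lemma keyle_trans: "keyle u v \<Longrightarrow> keyle v w \<Longrightarrow> keyle u w"
  unfolding keyle_def by auto

lemma keyle_refl: "keyle u u"
  unfolding keyle_def by auto

lemma keyle_min:
  assumes "finite S" "S \<noteq> {}"
  shows "\<exists>u\<in>S. \<forall>w\<in>S. keyle u w"
proof -
  define m where "m = Min (sqn ` S)"
  have mS: "m \<in> sqn ` S" unfolding m_def using assms by simp
  define S' where "S' = {u\<in>S. sqn u = m}"
  have "finite S'" "S' \<noteq> {}" using assms mS unfolding S'_def by auto
  then have "Min (lst ` S') \<in> lst ` S'" by simp
  then obtain u where u: "u \<in> S'" "lst u = Min (lst ` S')" by auto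
  have "keyle u w" if "w \<in> S" for w
  proof -
    have "sqn u \<le> sqn w" using u that assms unfolding S'_def m_def by auto
    moreover have "sqn u = sqn w \<Longrightarrow> lst u \<le> lst w"
      using u that \<open>finite S'\<close> unfolding S'_def by auto
    ultimately show ?thesis unfolding keyle_def by force
  qed
  then show ?thesis using u unfolding S'_def by auto
qed

lemma mem_bxs: "v \<in> bxs s \<longleftrightarrow> (\<forall>i. -s \<le> v$i \<and> v$i \<le> s)"
  unfolding bxs_def abs_le_iff by (auto; smt (verit))

lemma finite_cube: "finite (bxs s :: (int^'n) set)"
proof -
  have "(bxs s :: (int^'n) set) \<subseteq> vec_lambda ` (PiE UNIV (\<lambda>_. {-s..s}))"
  proof
    fix v :: "int^'n" assume "v \<in> bxs s"
    then have "vec_nth v \<in> PiE UNIV (\<lambda>_. {-s..s})" by (auto simp: mem_bxs)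
    then show "v \<in> vec_lambda ` (PiE UNIV (\<lambda>_. {-s..s}))"
      by (metis image_eqI vec_nth_inverse)
  qed
  moreover have "finite (PiE UNIV (\<lambda>_::'n. {-s..s}))" by (simp add: finite_PiE)
  ultimately show ?thesis using finite_subset by blast
qed

lemma card_vecset:
  "card {v::int^'n. \<forall>j. v$j \<in> B j} = (\<Prod>j\<in>UNIV. card (B j))"
proof -
  have "bij_betw vec_lambda (PiE UNIV B) {v::int^'n. \<forall>j. v$j \<in> B j}"
    unfolding bij_betw_def
  proof
    show "inj_on vec_lambda (PiE UNIV B)"
      by (auto simp: inj_on_def vec_lambda_inject fun_eq_iff)
    show "vec_lambda ` PiE UNIV B = {v::int^'n. \<forall>j. v$j \<in> B j}"
    proof
      show "vec_lambda ` PiE UNIV B \<subseteq> {v. \<forall>j. v $ j \<in> B j}" by auto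
      show "{v. \<forall>j. v $ j \<in> B j} \<subseteq> vec_lambda ` PiE UNIV B"
      proof
        fix v :: "int^'n" assume "v \<in> {v. \<forall>j. v $ j \<in> B j}"
        then have "vec_nth v \<in> PiE UNIV B" by auto
        then show "v \<in> vec_lambda ` PiE UNIV B" by (metis image_eqI vec_nth_inverse)
      qed
    qed
  qed
  then have "card {v::int^'n. \<forall>j. v$j \<in> B j} = card (PiE UNIV B)"
    by (simp add: bij_betw_same_card)
  also have "\<dots> = (\<Prod>j\<in>UNIV. card (B j))" by (simp add: card_PiE)
  finally show ?thesis .
qed

lemma card_cube: "s \<ge> 0 \<Longrightarrow> card (bxs s :: (int^'n) set) = nat (2 * s + 1) ^ CARD('n)"
proof -
  assume s: "s \<ge> 0"
  have e: "bxs s = {v::int^'n. \<forall>j. v$j \<in> (\<lambda>_. {-s..s}) j}" by (auto simp: mem_bxs)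
  have "card (bxs s :: (int^'n) set) = (\<Prod>j\<in>(UNIV::'n set). card {-s..s})"
    unfolding e by (rule card_vecset)
  then show ?thesis using s by simp
qed

lemma card_slice:
  assumes "L \<ge> 0"
  shows "card {v::int^'n. \<forall>j. v$j \<in> (if j = i then {0} else {-L..L})} = nat (2*L+1) ^ (CARD('n) - 1)"
proof -
  have "card {v::int^'n. \<forall>j. v$j \<in> (if j = i then {0} else {-L..L})}
      = (\<Prod>j\<in>UNIV. card (if j = i then {0::int} else {-L..L}))" by (rule card_vecset)
  also have "\<dots> = (\<Prod>j\<in>UNIV. if j = i then 1 else nat (2*L+1))"
    by (rule prod.cong) auto
  also have "\<dots> = nat (2*L+1) ^ (CARD('n) - 1)"
  proof -
    have "(\<Prod>j\<in>UNIV. if j = i then 1 else nat (2*L+1)) = (if i = i then 1 else nat (2*L+1)) * (\<Prod>j\<in>UNIV-{i}. if j = i then 1 else nat (2*L+1))"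
      by (rule prod.remove) auto
    also have "(\<Prod>j\<in>UNIV-{i}. if j = i then 1 else nat (2*L+1)) = (\<Prod>j\<in>UNIV-{i}. nat (2*L+1))"
      by (rule prod.cong) auto
    also have "\<dots> = nat (2*L+1) ^ (CARD('n) - 1)" by (simp add: card_Diff_singleton)
    finally show ?thesis by simp
  qed
  finally show ?thesis .
qed

lemma sqn_ax: "sqn (v - ax i t) = sqn v - 2*t*(v$i) + t^2"
proof -
  have "sqn (v - ax i t) = (\<Sum>j\<in>UNIV. (v$j)^2 + (if j = i then t^2 - 2*t*(v$i) else 0))"
    unfolding sqn_def ax_def by (rule sum.cong) (auto simp: power2_eq_square algebra_simps)
  also have "\<dots> = sqn v + (t^2 - 2*t*(v$i))"
    by (simp add: sum.distrib sqn_def)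
  finally show ?thesis by simp
qed

definition cell :: "(int^'n) set \<Rightarrow> int^'n \<Rightarrow> (int^'n) set" where
  "cell D a = {p. \<forall>b\<in>D. keyle (a - p) (b - p)}"

lemma keyle_shift: "keyle (a - p) (b - p) \<longleftrightarrow>
   (sqn (a-p) - sqn (b-p) < 0 \<or> (sqn (a-p) - sqn (b-p) = 0 \<and> lst a \<le> lst b))"
  by (auto simp: keyle_def lst_shift)

lemma betw_bound:
  fixes \<beta> j k :: int
  assumes "(0 \<le> j \<and> j \<le> k) \<or> (k \<le> j \<and> j \<le> 0)"
  shows "\<beta>*j \<le> 0 \<or> \<beta>*j \<le> \<beta>*k"
proof (cases "\<beta> \<ge> 0")
  case True
  then show ?thesis using assms
    by (meson mult_left_mono mult_nonneg_nonpos)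
next
  case False
  then have b: "\<beta> \<le> 0" by simp
  show ?thesis using assms
  proof
    assume "0 \<le> j \<and> j \<le> k"
    then have "\<beta>*j \<le> 0" using b by (simp add: mult_nonpos_nonneg)
    then show ?thesis ..
  next
    assume "k \<le> j \<and> j \<le> 0"
    then have "\<beta>*j \<le> \<beta>*k" using b by (simp add: mult_left_mono_neg)
    then show ?thesis ..
  qed
qed

lemma ax_add: "ax i (s + t) = ax i s + ax i t"
  by (simp add: ax_def vec_eq_iff)

lemma ax_0: "ax i 0 = 0"
  by (simp add: ax_def vec_eq_iff)

lemma ax_nth: "ax i t $ j = (if j = i then t else 0)"
  by (simp add: ax_def)

lemma cell_conv:
  assumes "p \<in> cell D a" "p + ax i k \<in> cell D a" "(0 \<le> j \<and> j \<le> k) \<or> (k \<le> j \<and> j \<le> 0)"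
  shows "p + ax i j \<in> cell D a"
  unfolding cell_def
proof (intro CollectI ballI)
  fix b assume bD: "b \<in> D"
  define v where "v = a - p"
  define w where "w = b - p"
  define h0 where "h0 = sqn v - sqn w"
  define \<beta> where "\<beta> = 2 * (w$i - v$i)"
  have H: "sqn (a - (p + ax i t)) - sqn (b - (p + ax i t)) = h0 + \<beta> * t" for t
  proof -
    have "a - (p + ax i t) = v - ax i t" "b - (p + ax i t) = w - ax i t"
      unfolding v_def w_def by (simp_all add: algebra_simps)
    then show ?thesis unfolding h0_def \<beta>_def by (simp add: sqn_ax algebra_simps)
  qed
  have c0: "h0 < 0 \<or> (h0 = 0 \<and> lst a \<le> lst b)"
    using assms(1) bD unfolding cell_def keyle_shift h0_def v_def w_def by simp
  have "keyle (a - (p + ax i k)) (b - (p + ax i k))" using assms(2) bD unfolding cell_def by blast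
  then have ck: "h0 + \<beta>*k < 0 \<or> (h0 + \<beta>*k = 0 \<and> lst a \<le> lst b)"
    unfolding keyle_shift H .
  have bj: "\<beta>*j \<le> 0 \<or> \<beta>*j \<le> \<beta>*k" using betw_bound[OF assms(3)] .
  have "h0 + \<beta>*j < 0 \<or> (h0 + \<beta>*j = 0 \<and> lst a \<le> lst b)"
    using c0 ck bj by auto
  then show "keyle (a - (p + ax i j)) (b - (p + ax i j))"
    unfolding keyle_shift H by simp
qed

lemma runend_card:
  fixes T :: "(int^'n) set"
  assumes Tsub: "T \<subseteq> {p. a - p \<in> bxs L}" and L: "L \<ge> 0"
    and conv: "\<And>p k j. p\<in>T \<Longrightarrow> p + ax i k \<in> T \<Longrightarrow> (0\<le>j\<and>j\<le>k \<or> k\<le>j\<and>j\<le>0) \<Longrightarrow> p + ax i j \<in> T"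
    and \<sigma>: "\<sigma> = 1 \<or> \<sigma> = -1"
  shows "card {q\<in>T. q + ax i \<sigma> \<notin> T} \<le> nat (2*L+1)^(CARD('n)-1)"
proof -
  define S where "S = {q\<in>T. q + ax i \<sigma> \<notin> T}"
  define \<pi> where "\<pi> q = (\<chi> j. if j = i then 0 else (a - q)$j)" for q :: "int^'n"
  define Sl where "Sl = {v::int^'n. \<forall>j. v$j \<in> (if j = i then {0} else {-L..L})}"
  have inj: "inj_on \<pi> S"
  proof
    fix q q' assume q: "q \<in> S" and q': "q' \<in> S" and e: "\<pi> q = \<pi> q'"
    define t where "t = q'$i - q$i"
    have qq: "q' = q + ax i t"
    proof (subst vec_eq_iff, intro allI)
      fix j
      show "q' $ j = (q + ax i t) $ j"
      proof (cases "j = i")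
        case True then show ?thesis by (simp add: ax_nth t_def)
      next
        case False
        have "\<pi> q $ j = \<pi> q' $ j" using e by simp
        then have "(a - q)$j = (a - q')$j" using False unfolding \<pi>_def by simp
        then show ?thesis using False by (simp add: ax_nth)
      qed
    qed
    show "q = q'"
    proof (rule ccontr)
      assume "q \<noteq> q'"
      then have t0: "t \<noteq> 0" using qq by (auto simp: ax_0)
      have qT: "q \<in> T" "q' \<in> T" using q q' unfolding S_def by auto
      show False
      proof (cases "\<sigma> * t > 0")
        case True
        then have "0\<le>\<sigma>\<and>\<sigma>\<le>t \<or> t\<le>\<sigma>\<and>\<sigma>\<le>0" using \<sigma> by auto
        then have "q + ax i \<sigma> \<in> T" using conv[of q t \<sigma>] qT qq by simp
        then show False using q unfolding S_def by simp
      next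
        case False
        then have "0\<le>\<sigma>\<and>\<sigma>\<le>-t \<or> -t\<le>\<sigma>\<and>\<sigma>\<le>0" using \<sigma> t0 by (auto simp: zero_less_mult_iff)
        moreover have "q' + ax i (-t) = q" using qq by (simp add: vec_eq_iff ax_nth)
        ultimately have "q' + ax i \<sigma> \<in> T" using conv[of q' "-t" \<sigma>] qT by simp
        then show False using q' unfolding S_def by simp
      qed
    qed
  qed
  have img: "\<pi> ` S \<subseteq> Sl"
  proof
    fix v assume "v \<in> \<pi> ` S"
    then obtain q where q: "q \<in> S" "v = \<pi> q" by auto
    then have "a - q \<in> bxs L" using Tsub unfolding S_def by auto
    then show "v \<in> Sl" using q unfolding Sl_def \<pi>_def by (auto simp: mem_bxs)
  qed
  have "finite Sl"
  proof (rule finite_subset[OF _ finite_cube[of L]])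
    show "Sl \<subseteq> bxs L"
    proof
      fix v assume v: "v \<in> Sl"
      show "v \<in> bxs L" unfolding mem_bxs
      proof
        fix j
        have "v$j \<in> (if j = i then {0} else {-L..L})" using v unfolding Sl_def by blast
        then show "- L \<le> v $ j \<and> v $ j \<le> L" using L by (cases "j = i") auto
      qed
    qed
  qed
  have "card S = card (\<pi> ` S)" using inj by (simp add: card_image)
  also have "\<dots> \<le> card Sl" using img \<open>finite Sl\<close> by (rule card_mono[rotated])
  also have "\<dots> = nat (2*L+1)^(CARD('n)-1)" unfolding Sl_def by (rule card_slice[OF L])
  finally show ?thesis unfolding S_def .
qed

definition dl :: "(int^'n) set \<Rightarrow> int^'n \<Rightarrow> nat" where
  "dl T f = card {q\<in>T. q + f \<notin> T}"

lemma dl_sub: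
  assumes "finite T"
  shows "dl T (u + w) \<le> dl T u + dl T w"
proof -
  have "{q\<in>T. q + (u + w) \<notin> T} \<subseteq> {q\<in>T. q + u \<notin> T} \<union> (\<lambda>q. q - u) ` {q\<in>T. q + w \<notin> T}"
  proof
    fix q assume q: "q \<in> {q\<in>T. q + (u + w) \<notin> T}"
    show "q \<in> {q\<in>T. q + u \<notin> T} \<union> (\<lambda>q. q - u) ` {q\<in>T. q + w \<notin> T}"
    proof (cases "q + u \<in> T")
      case True
      then have "q + u \<in> {q\<in>T. q + w \<notin> T}" using q by (simp add: add.assoc)
      then have "(q + u) - u \<in> (\<lambda>q. q - u) ` {q\<in>T. q + w \<notin> T}" by blast
      then show ?thesis by simp
    next
      case False then show ?thesis using q by simp
    qed
  qed
  then have "dl T (u + w) \<le> card ({q\<in>T. q + u \<notin> T} \<union> (\<lambda>q. q - u) ` {q\<in>T. q + w \<notin> T})"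
    unfolding dl_def by (rule card_mono[rotated]) (use assms in simp)
  also have "\<dots> \<le> card {q\<in>T. q + u \<notin> T} + card ((\<lambda>q. q - u) ` {q\<in>T. q + w \<notin> T})"
    by (rule card_Un_le)
  also have "\<dots> \<le> dl T u + dl T w" unfolding dl_def
    using card_image_le[of "{q\<in>T. q + w \<notin> T}" "\<lambda>q. q - u"] assms by simp
  finally show ?thesis .
qed

lemma dl_0: "dl T 0 = 0"
  by (simp add: dl_def)

lemma dl_ax_mult:
  assumes "finite T"
  shows "dl T (ax i (int n * \<sigma>)) \<le> n * dl T (ax i \<sigma>)"
proof (induction n)
  case 0 then show ?case by (simp add: ax_0 dl_0)
next
  case (Suc n)
  have "ax i (int (Suc n) * \<sigma>) = ax i (int n * \<sigma>) + ax i \<sigma>"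
    by (simp add: ax_add[symmetric] algebra_simps)
  then have "dl T (ax i (int (Suc n) * \<sigma>)) \<le> dl T (ax i (int n * \<sigma>)) + dl T (ax i \<sigma>)"
    using dl_sub[OF assms] by simp
  then show ?case using Suc by simp
qed

lemma dl_ax:
  fixes E :: nat
  assumes "finite T" and E: "\<And>\<sigma>. \<sigma> = 1 \<or> \<sigma> = -1 \<Longrightarrow> dl T (ax i \<sigma>) \<le> E"
  shows "dl T (ax i k) \<le> nat \<bar>k\<bar> * E"
proof (cases "k \<ge> 0")
  case True
  then have e: "int (nat \<bar>k\<bar>) * 1 = k" by simp
  have "dl T (ax i (int (nat \<bar>k\<bar>) * 1)) \<le> nat \<bar>k\<bar> * dl T (ax i 1)" by (rule dl_ax_mult[OF assms(1)])
  then have "dl T (ax i k) \<le> nat \<bar>k\<bar> * dl T (ax i 1)" by (simp only: e)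
  also have "\<dots> \<le> nat \<bar>k\<bar> * E" using E[of 1] by simp
  finally show ?thesis .
next
  case False
  then have e: "int (nat \<bar>k\<bar>) * (-1) = k" by simp
  have "dl T (ax i (int (nat \<bar>k\<bar>) * (-1))) \<le> nat \<bar>k\<bar> * dl T (ax i (-1))" by (rule dl_ax_mult[OF assms(1)])
  then have "dl T (ax i k) \<le> nat \<bar>k\<bar> * dl T (ax i (-1))" by (simp only: e)
  also have "\<dots> \<le> nat \<bar>k\<bar> * E" using E[of "-1"] by simp
  finally show ?thesis .
qed

lemma dl_vec:
  fixes E :: nat and f :: "int^'n" and T :: "(int^'n) set"
  assumes "finite T" and E: "\<And>i \<sigma>. \<sigma> = 1 \<or> \<sigma> = -1 \<Longrightarrow> dl T (ax i \<sigma>) \<le> E"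
  shows "dl T f \<le> (\<Sum>i\<in>UNIV. nat \<bar>f$i\<bar>) * E"
proof -
  have "dl T (\<chi> j. if j \<in> S then f$j else 0) \<le> (\<Sum>i\<in>S. nat \<bar>f$i\<bar>) * E" if "finite S" for S
    using that
  proof (induction S rule: finite_induct)
    case empty
    have "(\<chi> j. if j \<in> {} then f$j else 0) = (0::int^'n)" by (simp add: vec_eq_iff)
    then show ?case by (simp add: dl_0)
  next
    case (insert x S)
    have "(\<chi> j. if j \<in> insert x S then f$j else 0) = (\<chi> j. if j \<in> S then f$j else 0) + ax x (f$x)"
      using insert(2) by (auto simp: vec_eq_iff ax_nth)
    then have "dl T (\<chi> j. if j \<in> insert x S then f$j else 0) \<le> dl T (\<chi> j. if j \<in> S then f$j else 0) + dl T (ax x (f$x))"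
      using dl_sub[OF assms(1)] by simp
    also have "\<dots> \<le> (\<Sum>i\<in>S. nat \<bar>f$i\<bar>) * E + nat \<bar>f$x\<bar> * E"
      using insert(3) dl_ax[OF assms(1) E] by (meson add_mono)
    also have "\<dots> = (\<Sum>i\<in>insert x S. nat \<bar>f$i\<bar>) * E" using insert by (simp add: algebra_simps)
    finally show ?case .
  qed
  from this[of UNIV] show ?thesis by (simp add: vec_lambda_eta)
qed

lemma boundary_card:
  assumes "finite F" "finite T"
  shows "card ({f + q | f q. f\<in>F \<and> q\<in>T} - T) \<le> (\<Sum>f\<in>F. dl T f)"
proof -
  have "{f + q | f q. f\<in>F \<and> q\<in>T} - T \<subseteq> (\<Union>f\<in>F. (\<lambda>q. q + f) ` {q\<in>T. q + f \<notin> T})"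
    by (auto simp: add.commute)
  then have "card ({f + q | f q. f\<in>F \<and> q\<in>T} - T) \<le> card (\<Union>f\<in>F. (\<lambda>q. q + f) ` {q\<in>T. q + f \<notin> T})"
    by (rule card_mono[rotated]) (use assms in auto)
  also have "\<dots> \<le> (\<Sum>f\<in>F. card ((\<lambda>q. q + f) ` {q\<in>T. q + f \<notin> T}))"
    by (rule card_UN_le[OF assms(1)])
  also have "\<dots> \<le> (\<Sum>f\<in>F. dl T f)"
    unfolding dl_def by (rule sum_mono) (rule card_image_le, use assms in simp)
  finally show ?thesis .
qed

lemma sqn_ge: "(w$i)^2 \<le> sqn w"
  unfolding sqn_def by (rule member_le_sum) auto

lemma sqn_le: "(v::int^'n) \<in> bxs r \<Longrightarrow> sqn v \<le> int CARD('n) * r^2"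
proof -
  assume v: "v \<in> bxs r"
  have "sqn v \<le> (\<Sum>i\<in>(UNIV::'n set). r^2)" unfolding sqn_def
  proof (rule sum_mono)
    fix i
    have "\<bar>v$i\<bar> \<le> r" using v by (simp add: bxs_def)
    then show "(v$i)^2 \<le> r^2"
      by (metis abs_ge_zero abs_le_square_iff abs_of_nonneg dual_order.trans)
  qed
  then show ?thesis by simp
qed

lemma cell_lower:
  fixes a :: "int^'n"
  assumes aD: "a \<in> D" and sep: "\<And>b. b \<in> D \<Longrightarrow> b \<noteq> a \<Longrightarrow> b - a \<notin> bxs s"
    and r: "r \<ge> 0" and s: "s > (int CARD('n) + 1) * r"
  shows "(\<lambda>v. a + v) ` bxs r \<subseteq> cell D a"
proof
  fix p assume "p \<in> (\<lambda>v. a + v) ` bxs r"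
  then obtain v where v: "v \<in> bxs r" "p = a + v" by auto
  let ?N = "int CARD('n)"
  have N1: "?N \<ge> 1" using finite_UNIV_card_ge_0[where 'a='n, OF finite_class.finite_UNIV] by simp
  show "p \<in> cell D a" unfolding cell_def
  proof (intro CollectI ballI)
    fix b assume bD: "b \<in> D"
    show "keyle (a - p) (b - p)"
    proof (cases "b = a")
      case True then show ?thesis by (simp add: keyle_refl)
    next
      case False
      then obtain i where i: "\<bar>(b - a)$i\<bar> > s" using sep[OF bD] by (auto simp: bxs_def not_le)
      have vi: "\<bar>v$i\<bar> \<le> r" using v by (simp add: bxs_def)
      have "(b - p)$i = (b - a)$i - v$i" using v by simp
      then have tri: "\<bar>(b - a)$i\<bar> \<le> \<bar>(b - p)$i\<bar> + \<bar>v$i\<bar>"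
        by (metis abs_triangle_ineq diff_add_cancel)
      have "s - r > ?N * r" using s by (simp add: algebra_simps)
      then have big: "\<bar>(b - p)$i\<bar> > ?N * r" using i vi tri by linarith
      have "(?N * r)^2 < \<bar>(b - p)$i\<bar>^2"
        by (rule power_strict_mono[OF big]) (use r in auto)
      then have "(?N * r)^2 < ((b - p)$i)^2" by simp
      also have "\<dots> \<le> sqn (b - p)" by (rule sqn_ge)
      finally have hb: "(?N * r)^2 < sqn (b - p)" .
      have "sqn (a - p) = sqn (- v)" using v by simp
      also have "\<dots> \<le> ?N * r^2" by (rule sqn_le) (use v in \<open>auto simp: bxs_def\<close>)
      also have "\<dots> \<le> (?N * r)^2"
      proof -
        have "?N * 1 \<le> ?N * ?N" using N1 by (intro mult_left_mono) auto
        then have "?N * r^2 \<le> (?N * ?N) * r^2" by (intro mult_right_mono) auto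
        then show ?thesis by (simp add: power_mult_distrib power2_eq_square algebra_simps)
      qed
      finally show ?thesis using hb unfolding keyle_def by simp
    qed
  qed
qed

lemma clopen_nbhd:
  assumes cpt: "compact_space X" and hd: "Hausdorff_space X" and td: "totally_disconnected_space X"
    and U: "openin X U" and x: "x \<in> U"
  shows "\<exists>V. closedin X V \<and> openin X V \<and> x \<in> V \<and> V \<subseteq> U"
proof -
  have xX: "x \<in> topspace X" using U x openin_subset by blast
  have "separated_between X {x} (topspace X - U)"
  proof (rule cut_wire_fence_theorem_gen)
    show "compactin X {x}" using xX by simp
    show "closedin X (topspace X - U)" using U by blast
    fix C assume "connectedin X C"
    then obtain a where "C \<subseteq> {a}" using td unfolding totally_disconnected_space_def by blast
    then show "disjnt C {x} \<or> disjnt C (topspace X - U)" using x by (auto simp: disjnt_def)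
  qed (use cpt hd in auto)
  then obtain V where "closedin X V" "openin X V" "{x} \<subseteq> V" "topspace X - U \<subseteq> topspace X - V"
    unfolding separated_between by blast
  moreover have "V \<subseteq> topspace X" using \<open>openin X V\<close> openin_subset by blast
  ultimately show ?thesis by blast
qed

definition near :: "(int^'n \<Rightarrow> 'a \<Rightarrow> 'a) \<Rightarrow> int \<Rightarrow> 'a set \<Rightarrow> 'a \<Rightarrow> bool" where
  "near \<phi> s A y \<longleftrightarrow> (\<exists>v\<in>bxs s. \<phi> v y \<in> A)"

primrec mkA :: "(int^'n \<Rightarrow> 'a \<Rightarrow> 'a) \<Rightarrow> int \<Rightarrow> 'a set list \<Rightarrow> 'a set" where
  "mkA \<phi> s [] = {}"
| "mkA \<phi> s (U # Us) = mkA \<phi> s Us \<union> {y\<in>U. \<not> near \<phi> s (mkA \<phi> s Us) y}"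

locale zact =
  fixes X :: "'a topology" and \<phi> :: "int ^ 'n \<Rightarrow> 'a \<Rightarrow> 'a"
  assumes cpt: "compact_space X" and hd: "Hausdorff_space X" and td: "totally_disconnected_space X"
    and ha: "homeo_action X \<phi>" and fr: "free_action X \<phi>"
begin

lemma cont: "continuous_map X X (\<phi> p)"
  using ha unfolding homeo_action_def by (simp add: homeomorphic_imp_continuous_map)

lemma maps: "y \<in> topspace X \<Longrightarrow> \<phi> p y \<in> topspace X"
  using continuous_map_image_subset_topspace[OF cont] by blast

lemma act0: "y \<in> topspace X \<Longrightarrow> \<phi> 0 y = y"
  using ha unfolding homeo_action_def by simp

lemma actadd: "y \<in> topspace X \<Longrightarrow> \<phi> (p + q) y = \<phi> p (\<phi> q y)"
  using ha unfolding homeo_action_def by simp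

lemma freeD: "y \<in> topspace X \<Longrightarrow> \<phi> p y = y \<Longrightarrow> p = 0"
  using fr unfolding free_action_def by blast

lemma act_inj: "y \<in> topspace X \<Longrightarrow> \<phi> p y = \<phi> q y \<Longrightarrow> p = q"
proof -
  assume y: "y \<in> topspace X" and e: "\<phi> p y = \<phi> q y"
  have "\<phi> (p - q) (\<phi> q y) = \<phi> p y" using actadd[OF y, of "p - q" q] by simp
  also have "\<dots> = \<phi> q y" by (rule e)
  finally have "\<phi> (-q) (\<phi> (p - q) (\<phi> q y)) = \<phi> (-q) (\<phi> q y)" by simp
  then have "\<phi> (p - q) y = y"
    using actadd[OF y] actadd[OF maps[OF y]] act0[OF y]
    by (metis add.commute add.left_inverse diff_add_cancel)
  then have "p - q = 0" by (rule freeD[OF y])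
  then show "p = q" by simp
qed

lemma act_inv: "y \<in> topspace X \<Longrightarrow> \<phi> (-p) (\<phi> p y) = y"
  using actadd[of y "-p" p] act0 by simp

definition clopen :: "'a set \<Rightarrow> bool" where
  "clopen S \<longleftrightarrow> closedin X S \<and> openin X S"

lemma clopen_pre: "clopen S \<Longrightarrow> clopen {y\<in>topspace X. \<phi> p y \<in> S}"
  unfolding clopen_def
  using openin_continuous_map_preimage[OF cont] closedin_continuous_map_preimage[OF cont] by blast

lemma clopen_union: "finite I \<Longrightarrow> (\<And>i. i \<in> I \<Longrightarrow> clopen (S i)) \<Longrightarrow> clopen (\<Union>i\<in>I. S i)"
  unfolding clopen_def by (auto intro!: closedin_Union)

lemma clopen_diff: "clopen S \<Longrightarrow> clopen T \<Longrightarrow> clopen (S - T)"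
  unfolding clopen_def by blast

lemma clopen_sub: "clopen S \<Longrightarrow> S \<subseteq> topspace X"
  unfolding clopen_def using openin_subset by blast

lemma marker_nbhd:
  assumes x: "x \<in> topspace X"
  shows "\<exists>U. clopen U \<and> x \<in> U \<and> (\<forall>y\<in>U. \<forall>v\<in>bxs s. v \<noteq> 0 \<longrightarrow> \<phi> v y \<notin> U)"
proof -
  define W where "W = {v. v \<in> bxs s \<and> v \<noteq> 0 \<and> \<phi> v x = \<phi> v x}"
  have fW: "finite W" unfolding W_def by (rule finite_subset[OF _ finite_cube[of s]]) auto
  have "\<forall>v\<in>W. \<exists>P. openin X (fst P) \<and> openin X (snd P) \<and> x \<in> fst P \<and> \<phi> v x \<in> snd P \<and> disjnt (fst P) (snd P)"
  proof
    fix v :: "int^'n" assume "v \<in> W"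
    then have "v \<noteq> 0" unfolding W_def by simp
    then have ne: "\<phi> v x \<noteq> x" using freeD[OF x, of v] by blast
    have xx: "x \<in> topspace X \<and> \<phi> v x \<in> topspace X \<and> x \<noteq> \<phi> v x" using x maps[OF x] ne by auto
    obtain Oa Ob where "openin X Oa" "openin X Ob" "x \<in> Oa" "\<phi> v x \<in> Ob" "disjnt Oa Ob"
      using hd[unfolded Hausdorff_space_def, rule_format, OF xx] by blast
    then show "\<exists>P. openin X (fst P) \<and> openin X (snd P) \<and> x \<in> fst P \<and> \<phi> v x \<in> snd P \<and> disjnt (fst P) (snd P)"
      by (intro exI[of _ "(Oa, Ob)"]) simp
  qed
  from bchoice[OF this] obtain g where g: "\<forall>v\<in>W. openin X (fst (g v)) \<and> openin X (snd (g v)) \<and> x \<in> fst (g v) \<and> \<phi> v x \<in> snd (g v) \<and> disjnt (fst (g v)) (snd (g v))"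
    by blast
  define Oa where "Oa v = fst (g v)" for v
  define Ob where "Ob v = snd (g v)" for v
  have OO: "\<And>v. v \<in> W \<Longrightarrow> openin X (Oa v) \<and> openin X (Ob v) \<and> x \<in> Oa v \<and> \<phi> v x \<in> Ob v \<and> disjnt (Oa v) (Ob v)"
    using g unfolding Oa_def Ob_def by blast
  define G where "G = topspace X - (\<Union>v\<in>W. (topspace X - Oa v) \<union> {y\<in>topspace X. \<phi> v y \<notin> Ob v})"
  have "openin X G"
  proof -
    have "closedin X (\<Union>v\<in>W. (topspace X - Oa v) \<union> {y\<in>topspace X. \<phi> v y \<notin> Ob v})"
    proof (rule closedin_Union)
      show "finite ((\<lambda>v. (topspace X - Oa v) \<union> {y\<in>topspace X. \<phi> v y \<notin> Ob v}) ` W)" using fW by simp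
    next
      fix T assume "T \<in> (\<lambda>v. (topspace X - Oa v) \<union> {y\<in>topspace X. \<phi> v y \<notin> Ob v}) ` W"
      then obtain v where v: "v \<in> W" "T = (topspace X - Oa v) \<union> {y\<in>topspace X. \<phi> v y \<notin> Ob v}" by blast
      have "{y\<in>topspace X. \<phi> v y \<notin> Ob v} = topspace X - {y\<in>topspace X. \<phi> v y \<in> Ob v}" by blast
      moreover have "openin X {y\<in>topspace X. \<phi> v y \<in> Ob v}"
        using openin_continuous_map_preimage[OF cont] OO[OF v(1)] by blast
      ultimately show "closedin X T" using v OO[OF v(1)] by auto
    qed
    then show ?thesis unfolding G_def by blast
  qed
  moreover have "x \<in> G" unfolding G_def using OO x by auto
  ultimately obtain V where V: "closedin X V" "openin X V" "x \<in> V" "V \<subseteq> G"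
    using clopen_nbhd[OF cpt hd td] by metis
  have "\<forall>y\<in>V. \<forall>v\<in>bxs s. v \<noteq> 0 \<longrightarrow> \<phi> v y \<notin> V"
  proof (intro ballI impI)
    fix y and v :: "int^'n" assume y: "y \<in> V" and v: "v \<in> bxs s" "v \<noteq> 0"
    then have vW: "v \<in> W" unfolding W_def by simp
    have "\<phi> v y \<in> Ob v" using y V(4) vW unfolding G_def by blast
    show "\<phi> v y \<notin> V"
    proof
      assume "\<phi> v y \<in> V"
      then have "\<phi> v y \<in> Oa v" using V(4) vW unfolding G_def by blast
      moreover have "disjnt (Oa v) (Ob v)" using OO[OF vW] by simp
      ultimately show False using \<open>\<phi> v y \<in> Ob v\<close> unfolding disjnt_def by blast
    qed
  qed
  then show ?thesis using V unfolding clopen_def by (intro exI[of _ V]) simp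
qed

lemma clopen_near:
  assumes "clopen A" "s \<ge> 0"
  shows "clopen {y\<in>topspace X. near \<phi> s A y}"
proof -
  have "{y\<in>topspace X. near \<phi> s A y} = (\<Union>v\<in>bxs s. {y\<in>topspace X. \<phi> v y \<in> A})"
    unfolding near_def by blast
  moreover have "clopen (\<Union>v\<in>bxs s. {y\<in>topspace X. \<phi> v y \<in> A})"
    by (rule clopen_union) (use finite_cube clopen_pre assms in auto)
  ultimately show ?thesis by simp
qed

lemma mkA_props:
  assumes s: "s \<ge> 0"
    and Us: "\<And>U. U \<in> set Us \<Longrightarrow> clopen U \<and> (\<forall>y\<in>U. \<forall>v\<in>bxs s. v \<noteq> 0 \<longrightarrow> \<phi> v y \<notin> U)"
  shows "clopen (mkA \<phi> s Us) \<and>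
         (\<forall>y\<in>mkA \<phi> s Us. \<forall>v\<in>bxs s. v \<noteq> 0 \<longrightarrow> \<phi> v y \<notin> mkA \<phi> s Us) \<and>
         (\<forall>y\<in>\<Union>(set Us). near \<phi> s (mkA \<phi> s Us) y)"
  using Us
proof (induction Us)
  case Nil
  then show ?case by (simp add: clopen_def)
next
  case (Cons U Us)
  define A where "A = mkA \<phi> s Us"
  define B where "B = {y\<in>U. \<not> near \<phi> s A y}"
  have IH: "clopen A" "\<And>y v. y \<in> A \<Longrightarrow> v \<in> bxs s \<Longrightarrow> v \<noteq> 0 \<Longrightarrow> \<phi> v y \<notin> A"
     "\<And>y. y \<in> \<Union>(set Us) \<Longrightarrow> near \<phi> s A y"
    using Cons.IH Cons.prems unfolding A_def by auto
  have U: "clopen U" "\<And>y v. y \<in> U \<Longrightarrow> v \<in> bxs s \<Longrightarrow> v \<noteq> 0 \<Longrightarrow> \<phi> v y \<notin> U"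
    using Cons.prems by auto
  have UX: "U \<subseteq> topspace X" using clopen_sub[OF U(1)] .
  have AX: "A \<subseteq> topspace X" using clopen_sub[OF IH(1)] .
  have eq: "mkA \<phi> s (U # Us) = A \<union> B" unfolding A_def B_def by simp
  have "B = U - {y\<in>topspace X. near \<phi> s A y}" unfolding B_def using UX by blast
  then have cB: "clopen B" using clopen_diff[OF U(1) clopen_near[OF IH(1) s]] by simp
  have c1: "clopen (A \<union> B)" using IH(1) cB unfolding clopen_def by blast
  have c2: "\<phi> v y \<notin> A \<union> B" if y: "y \<in> A \<union> B" and v: "v \<in> bxs s" "v \<noteq> 0" for y v
  proof
    assume vy: "\<phi> v y \<in> A \<union> B"
    have yX: "y \<in> topspace X" using y AX UX unfolding B_def by blast
    have mv: "-v \<in> bxs s" using v by (simp add: bxs_def)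
    show False
    proof (cases "y \<in> A")
      case True
      show False
      proof (cases "\<phi> v y \<in> A")
        case True then show False using IH(2)[OF \<open>y \<in> A\<close> v] by simp
      next
        case False
        then have "\<phi> v y \<in> B" using vy by blast
        then have "\<not> near \<phi> s A (\<phi> v y)" unfolding B_def by blast
        moreover have "\<phi> (-v) (\<phi> v y) \<in> A" using act_inv[OF yX] \<open>y \<in> A\<close> by simp
        ultimately show False using mv unfolding near_def by blast
      qed
    next
      case False
      then have yB: "y \<in> B" using y by blast
      show False
      proof (cases "\<phi> v y \<in> A")
        case True
        then have "near \<phi> s A y" using v unfolding near_def by blast
        then show False using yB unfolding B_def by blast
      next
        case False
        then have "\<phi> v y \<in> U" using vy unfolding B_def by blast
        then show False using U(2)[OF _ v] yB unfolding B_def by blast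
      qed
    qed
  qed
  have c3: "near \<phi> s (A \<union> B) y" if y: "y \<in> \<Union>(set (U # Us))" for y
  proof (cases "y \<in> U")
    case True
    show ?thesis
    proof (cases "near \<phi> s A y")
      case True then show ?thesis unfolding near_def by blast
    next
      case False
      then have "y \<in> B" using \<open>y \<in> U\<close> unfolding B_def by blast
      moreover have "\<phi> 0 y = y" using act0 UX \<open>y \<in> U\<close> by blast
      moreover have "(0::int^'n) \<in> bxs s" using s by (simp add: bxs_def)
      ultimately show ?thesis unfolding near_def by (metis UnI2)
    qed
  next
    case False
    then have "y \<in> \<Union>(set Us)" using y by simp
    then show ?thesis using IH(3) unfolding near_def by blast
  qed
  have "\<forall>y\<in>A\<union>B. \<forall>v\<in>bxs s. v \<noteq> 0 \<longrightarrow> \<phi> v y \<notin> A \<union> B" using c2 by blast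
  moreover have "\<forall>y\<in>\<Union>(set (U#Us)). near \<phi> s (A\<union>B) y" using c3 by blast
  ultimately show ?case unfolding eq using c1 by blast
qed

lemma markers:
  assumes s: "s \<ge> 0"
  shows "\<exists>A. clopen A \<and> (\<forall>y\<in>A. \<forall>v\<in>bxs s. v \<noteq> 0 \<longrightarrow> \<phi> v y \<notin> A)
             \<and> (\<forall>y\<in>topspace X. \<exists>v\<in>bxs s. \<phi> v y \<in> A)"
proof -
  define \<U> where "\<U> = {U. clopen U \<and> (\<forall>y\<in>U. \<forall>v\<in>bxs s. v \<noteq> 0 \<longrightarrow> \<phi> v y \<notin> U)}"
  have "compactin X (topspace X)" using cpt unfolding compact_space_def .
  moreover have "\<forall>U\<in>\<U>. openin X U"
  proof
    fix U assume "U \<in> \<U>"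
    then have "clopen U" unfolding \<U>_def mem_Collect_eq by (rule conjunct1)
    then show "openin X U" unfolding clopen_def by (rule conjunct2)
  qed
  moreover have "topspace X \<subseteq> \<Union>\<U>"
  proof
    fix x assume "x \<in> topspace X"
    then have "\<exists>U. clopen U \<and> x \<in> U \<and> (\<forall>y\<in>U. \<forall>v\<in>bxs s. v \<noteq> 0 \<longrightarrow> \<phi> v y \<notin> U)"
      by (rule marker_nbhd)
    then obtain U where U: "clopen U \<and> x \<in> U \<and> (\<forall>y\<in>U. \<forall>v\<in>bxs s. v \<noteq> 0 \<longrightarrow> \<phi> v y \<notin> U)"
      by (rule exE)
    then have UU: "U \<in> \<U>" unfolding \<U>_def by blast
    have "x \<in> U" using U by (rule conjunct1[OF conjunct2])
    then show "x \<in> \<Union>\<U>" by (rule UnionI[OF UU])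
  qed
  ultimately obtain \<F> where F: "finite \<F>" "\<F> \<subseteq> \<U>" "topspace X \<subseteq> \<Union>\<F>"
    unfolding compactin_def by meson
  obtain Us where Us: "set Us = \<F>" using finite_list[OF F(1)] by blast
  have "clopen (mkA \<phi> s Us) \<and>
         (\<forall>y\<in>mkA \<phi> s Us. \<forall>v\<in>bxs s. v \<noteq> 0 \<longrightarrow> \<phi> v y \<notin> mkA \<phi> s Us) \<and>
         (\<forall>y\<in>\<Union>(set Us). near \<phi> s (mkA \<phi> s Us) y)"
  proof (rule mkA_props[OF s])
    fix U assume "U \<in> set Us"
    then have "U \<in> \<U>" using F(2) Us by blast
    then show "clopen U \<and> (\<forall>y\<in>U. \<forall>v\<in>bxs s. v \<noteq> 0 \<longrightarrow> \<phi> v y \<notin> U)"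
      unfolding \<U>_def mem_Collect_eq .
  qed
  then have A: "clopen (mkA \<phi> s Us)" "\<forall>y\<in>mkA \<phi> s Us. \<forall>v\<in>bxs s. v \<noteq> 0 \<longrightarrow> \<phi> v y \<notin> mkA \<phi> s Us"
     "\<forall>y\<in>topspace X. near \<phi> s (mkA \<phi> s Us) y" using F(3) Us by auto
  show ?thesis
    by (rule exI[of _ "mkA \<phi> s Us"]) (use A in \<open>auto simp: near_def\<close>)
qed

end

lemma abs_le_sq: "\<bar>x::int\<bar> \<le> x^2"
proof (cases "x = 0")
  case False
  then have "1 \<le> \<bar>x\<bar>" by simp
  then have "\<bar>x\<bar> * 1 \<le> \<bar>x\<bar> * \<bar>x\<bar>" by (intro mult_left_mono) auto
  then show ?thesis by (simp add: power2_eq_square abs_mult[symmetric])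
qed simp

lemma sq_bound: "sqn (w::int^'n) \<le> m \<Longrightarrow> w \<in> bxs m"
proof -
  assume h: "sqn w \<le> m"
  have "\<bar>w$i\<bar> \<le> m" for i using abs_le_sq[of "w$i"] sqn_ge[of w i] h by linarith
  then show ?thesis by (simp add: bxs_def)
qed

locale zmark = zact X \<phi> for X :: "'a topology" and \<phi> :: "int ^ 'n \<Rightarrow> 'a \<Rightarrow> 'a" +
  fixes A :: "'a set" and s :: int
  assumes s0: "s \<ge> 0" and clA: "clopen A"
    and sepA: "\<And>y v. y \<in> A \<Longrightarrow> v \<in> bxs s \<Longrightarrow> v \<noteq> 0 \<Longrightarrow> \<phi> v y \<notin> A"
    and synA: "\<And>y. y \<in> topspace X \<Longrightarrow> \<exists>v\<in>bxs s. \<phi> v y \<in> A"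
begin

definition isc where "isc y u \<longleftrightarrow> \<phi> u y \<in> A \<and> (\<forall>w. \<phi> w y \<in> A \<longrightarrow> keyle u w)"

lemma isc_unique: "isc y u \<Longrightarrow> isc y u' \<Longrightarrow> u = u'"
  unfolding isc_def using keyle_antisym by blast

lemma isc_ex:
  assumes y: "y \<in> topspace X"
  shows "\<exists>u. isc y u"
proof -
  obtain v where v: "v \<in> bxs s" "\<phi> v y \<in> A" using synA[OF y] by blast
  define S where "S = {w \<in> bxs (sqn v). \<phi> w y \<in> A \<and> sqn w \<le> sqn v}"
  have fS: "finite S" unfolding S_def using finite_cube by (rule finite_subset[rotated]) auto
  have vS: "v \<in> S" unfolding S_def using v sq_bound[of v "sqn v"] by simp
  obtain u where u: "u \<in> S" "\<forall>w\<in>S. keyle u w" using keyle_min[OF fS] vS by blast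
  have "keyle u w" if w: "\<phi> w y \<in> A" for w
  proof (cases "sqn w \<le> sqn v")
    case True
    then have "w \<in> S" unfolding S_def using w sq_bound[of w "sqn v"] by simp
    then show ?thesis using u by blast
  next
    case False
    then have "sqn u < sqn w" using u(1) unfolding S_def by simp
    then show ?thesis unfolding keyle_def by simp
  qed
  then have "isc y u" unfolding isc_def using u(1) unfolding S_def by simp
  then show ?thesis by blast
qed

definition c where "c y = (THE u. isc y u)"

lemma isc_c: "y \<in> topspace X \<Longrightarrow> isc y (c y)"
  unfolding c_def using isc_ex isc_unique by (metis theI)

lemma c_eq: "y \<in> topspace X \<Longrightarrow> isc y u \<Longrightarrow> c y = u"
  using isc_c isc_unique by blast

lemma isc_bound:
  assumes y: "y \<in> topspace X" and u: "isc y u"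
  shows "u \<in> bxs (int CARD('n) * s)"
proof -
  obtain v where v: "v \<in> bxs s" "\<phi> v y \<in> A" using synA[OF y] by blast
  have "keyle u v" using u v unfolding isc_def by blast
  then have "sqn u \<le> sqn v" unfolding keyle_def by auto
  also have "\<dots> \<le> int CARD('n) * s^2" by (rule sqn_le[OF v(1)])
  also have "\<dots> \<le> (int CARD('n) * s)^2"
  proof -
    have N1: "int CARD('n) \<ge> 1" using finite_UNIV_card_ge_0[where 'a='n, OF finite_class.finite_UNIV] by simp
    have "int CARD('n) * 1 \<le> int CARD('n) * int CARD('n)" using N1 by (intro mult_left_mono) auto
    then have "int CARD('n) * s^2 \<le> (int CARD('n) * int CARD('n)) * s^2" by (intro mult_right_mono) auto
    then show ?thesis by (simp add: power_mult_distrib power2_eq_square algebra_simps)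
  qed
  finally have su: "sqn u \<le> (int CARD('n) * s)^2" .
  have "\<bar>u$i\<bar> \<le> int CARD('n) * s" for i
  proof -
    have "(u$i)^2 \<le> (int CARD('n) * s)^2" using sqn_ge[of u i] su by linarith
    then have "\<bar>u$i\<bar> \<le> \<bar>int CARD('n) * s\<bar>" by (simp add: abs_le_square_iff)
    then show ?thesis using s0 by simp
  qed
  then show ?thesis by (simp add: bxs_def)
qed

lemma isc_shift:
  assumes y: "y \<in> topspace X"
  shows "isc (\<phi> p y) w \<longleftrightarrow> (\<phi> (w + p) y \<in> A \<and> (\<forall>w'. \<phi> (w' + p) y \<in> A \<longrightarrow> keyle w w'))"
  unfolding isc_def using actadd[OF y] by simp

lemma clopen_isc: "clopen {y\<in>topspace X. isc y u}"
proof -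
  define Wu where "Wu = {w \<in> bxs (sqn u). \<not> keyle u w}"
  have fW: "finite Wu" unfolding Wu_def using finite_cube by (rule finite_subset[rotated]) auto
  have "{y\<in>topspace X. isc y u} = {y\<in>topspace X. \<phi> u y \<in> A} - (\<Union>w\<in>Wu. {y\<in>topspace X. \<phi> w y \<in> A})"
  proof (intro set_eqI iffI)
    fix y assume "y \<in> {y\<in>topspace X. isc y u}"
    then show "y \<in> {y\<in>topspace X. \<phi> u y \<in> A} - (\<Union>w\<in>Wu. {y\<in>topspace X. \<phi> w y \<in> A})"
      unfolding isc_def Wu_def by blast
  next
    fix y assume y: "y \<in> {y\<in>topspace X. \<phi> u y \<in> A} - (\<Union>w\<in>Wu. {y\<in>topspace X. \<phi> w y \<in> A})"
    have "keyle u w" if w: "\<phi> w y \<in> A" for w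
    proof (rule ccontr)
      assume nk: "\<not> keyle u w"
      then have "keyle w u" using keyle_total by blast
      then have "sqn w \<le> sqn u" unfolding keyle_def by auto
      then have "w \<in> Wu" unfolding Wu_def using nk sq_bound by blast
      then show False using y w by blast
    qed
    then show "y \<in> {y\<in>topspace X. isc y u}" using y unfolding isc_def by blast
  qed
  moreover have "clopen (\<Union>w\<in>Wu. {y\<in>topspace X. \<phi> w y \<in> A})"
    by (rule clopen_union[OF fW]) (rule clopen_pre[OF clA])
  ultimately show ?thesis using clopen_diff clopen_pre[OF clA] by simp
qed

definition K where "K = {(p, x). x \<in> topspace X \<and> isc (\<phi> p x) (c x - p)}"

lemma memK: "(p, x) \<in> K \<longleftrightarrow> x \<in> topspace X \<and> isc (\<phi> p x) (c x - p)"
  unfolding K_def by simp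

lemma K_c: "(p, x) \<in> K \<Longrightarrow> c (\<phi> p x) = c x - p"
  unfolding memK using c_eq maps by blast

lemma K_p: "(p, x) \<in> K \<Longrightarrow> p \<in> bxs (2 * (int CARD('n) * s))"
proof -
  assume pK: "(p, x) \<in> K"
  then have x: "x \<in> topspace X" and i: "isc (\<phi> p x) (c x - p)" by (auto simp: memK)
  have a1: "c x - p \<in> bxs (int CARD('n) * s)" by (rule isc_bound[OF maps[OF x] i])
  have a2: "c x \<in> bxs (int CARD('n) * s)" by (rule isc_bound[OF x isc_c[OF x]])
  have "\<bar>p$i\<bar> \<le> 2 * (int CARD('n) * s)" for i
  proof -
    have "\<bar>c x $ i - p $ i\<bar> \<le> int CARD('n) * s" using a1 unfolding bxs_def by simp
    moreover have "\<bar>c x $ i\<bar> \<le> int CARD('n) * s" using a2 unfolding bxs_def by simp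
    ultimately show ?thesis by linarith
  qed
  then show ?thesis by (simp add: bxs_def)
qed

lemma K_eq: "K = (\<Union>p\<in>bxs (2 * (int CARD('n) * s)). {p} \<times>
   (\<Union>u\<in>bxs (int CARD('n) * s). {x\<in>topspace X. isc x u} \<inter> {x\<in>topspace X. \<phi> p x \<in> {y\<in>topspace X. isc y (u - p)}}))"
proof (intro set_eqI iffI)
  fix g assume g: "g \<in> K"
  obtain p x where gpx: "g = (p, x)" by fastforce
  then have pK: "(p, x) \<in> K" using g by simp
  then have x: "x \<in> topspace X" and i: "isc (\<phi> p x) (c x - p)" by (auto simp: memK)
  have "c x \<in> bxs (int CARD('n) * s)" by (rule isc_bound[OF x isc_c[OF x]])
  moreover have "x \<in> {x\<in>topspace X. isc x (c x)}" using x isc_c by blast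
  moreover have "x \<in> {x\<in>topspace X. \<phi> p x \<in> {y\<in>topspace X. isc y (c x - p)}}" using x i maps by blast
  ultimately show "g \<in> (\<Union>p\<in>bxs (2 * (int CARD('n) * s)). {p} \<times>
   (\<Union>u\<in>bxs (int CARD('n) * s). {x\<in>topspace X. isc x u} \<inter> {x\<in>topspace X. \<phi> p x \<in> {y\<in>topspace X. isc y (u - p)}}))"
    using K_p[OF pK] gpx by blast
next
  fix g assume "g \<in> (\<Union>p\<in>bxs (2 * (int CARD('n) * s)). {p} \<times>
   (\<Union>u\<in>bxs (int CARD('n) * s). {x\<in>topspace X. isc x u} \<inter> {x\<in>topspace X. \<phi> p x \<in> {y\<in>topspace X. isc y (u - p)}}))"
  then obtain p x u where gpx: "g = (p, x)" and x: "x \<in> topspace X" "isc x u" "isc (\<phi> p x) (u - p)"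
    by blast
  have "c x = u" by (rule c_eq[OF x(1,2)])
  then show "g \<in> K" using gpx x by (simp add: memK)
qed

lemma K_open_compact: "openin (tg_top X) K \<and> compactin (tg_top X) K"
proof -
  define Kp where "Kp p = (\<Union>u\<in>bxs (int CARD('n) * s). {x\<in>topspace X. isc x u} \<inter> {x\<in>topspace X. \<phi> p x \<in> {y\<in>topspace X. isc y (u - p)}})" for p
  have cK: "clopen (Kp p)" for p
    unfolding Kp_def
  proof (rule clopen_union[OF finite_cube])
    fix u
    show "clopen ({x\<in>topspace X. isc x u} \<inter> {x\<in>topspace X. \<phi> p x \<in> {y\<in>topspace X. isc y (u - p)}})"
      using clopen_isc[of u] clopen_pre[OF clopen_isc[of "u - p"], of p] unfolding clopen_def by blast
  qed
  have KK: "K = (\<Union>p\<in>bxs (2 * (int CARD('n) * s)). {p} \<times> Kp p)"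
    unfolding Kp_def by (rule K_eq)
  have "openin (tg_top X) ({p} \<times> Kp p)" for p
    unfolding tg_top_def openin_prod_Times_iff using cK[of p] unfolding clopen_def by simp
  then have o: "openin (tg_top X) K" unfolding KK by blast
  have "compactin (tg_top X) ({p} \<times> Kp p)" for p
    unfolding tg_top_def compactin_Times using cK[of p] closedin_compact_space[OF cpt] unfolding clopen_def
    by (simp add: compactin_discrete_topology)
  then have "compactin (tg_top X) K" unfolding KK
    by (intro compactin_Union) (use finite_cube in auto)
  then show ?thesis using o by simp
qed

lemma K_elementary: "elementary_subgroupoid X \<phi> K"
  unfolding elementary_subgroupoid_def
proof (intro conjI ballI impI)
  show "K \<subseteq> topspace (tg_top X)"
    unfolding tg_top_def K_def by auto
  show "compactin (tg_top X) K" "openin (tg_top X) K" using K_open_compact by auto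
next
  fix x assume x: "x \<in> topspace X"
  then show "(0, x) \<in> K" unfolding memK using act0 isc_c by simp
next
  fix g h assume g: "g \<in> K" and h: "h \<in> K" and gh: "tg_src g = tg_rng \<phi> h"
  obtain p y where gp: "g = (p, y)" by fastforce
  obtain q z where hq: "h = (q, z)" by fastforce
  have yz: "y = \<phi> q z" using gh gp hq by (simp add: tg_src_def tg_rng_def)
  have z: "z \<in> topspace X" and hz: "isc (\<phi> q z) (c z - q)" using h hq by (auto simp: memK)
  have gy: "isc (\<phi> p y) (c y - p)" using g gp by (auto simp: memK)
  have "c y = c z - q" using K_c h hq yz by simp
  then have e2: "c z - (p + q) = c y - p" by (simp add: algebra_simps)
  have "isc (\<phi> (p + q) z) (c z - (p + q))" unfolding actadd[OF z] e2 using gy yz by simp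
  then show "tg_mult g h \<in> K" using gp hq z by (simp add: tg_mult_def memK)
next
  fix g assume g: "g \<in> K"
  obtain p x where gp: "g = (p, x)" by fastforce
  have x: "x \<in> topspace X" using g gp by (auto simp: memK)
  have e: "c (\<phi> p x) = c x - p" using K_c g gp by simp
  have "isc (\<phi> (- p) (\<phi> p x)) (c (\<phi> p x) - - p)" using e act_inv[OF x] isc_c[OF x] by simp
  then show "tg_inv \<phi> g \<in> K" using gp maps[OF x] by (simp add: tg_inv_def memK)
next
  fix g assume g: "g \<in> K" and e: "tg_rng \<phi> g = tg_src g"
  obtain p x where gp: "g = (p, x)" by fastforce
  have x: "x \<in> topspace X" using g gp by (auto simp: memK)
  show "fst g = 0" using freeD[OF x] e gp by (simp add: tg_rng_def tg_src_def)
qed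

end

context zmark
begin

definition Tx where "Tx x = {p. isc (\<phi> p x) (c x - p)}"

lemma fibK: "x \<in> topspace X \<Longrightarrow> fib K x = (\<lambda>p. (p, x)) ` Tx x"
  unfolding fib_def Tx_def tg_src_def by (auto simp: memK)

lemma orbK: "x \<in> topspace X \<Longrightarrow> orbit_class \<phi> K x = (\<lambda>p. \<phi> p x) ` Tx x"
  unfolding orbit_class_def by (simp add: fibK image_image tg_rng_def)

lemma card_orb: "x \<in> topspace X \<Longrightarrow> card (orbit_class \<phi> K x) = card (Tx x)"
  unfolding orbK by (rule card_image) (auto simp: inj_on_def intro: act_inj)

lemma T_cell: "x \<in> topspace X \<Longrightarrow> Tx x = cell {v. \<phi> v x \<in> A} (c x)"
proof -
  assume x: "x \<in> topspace X"
  have cA: "\<phi> (c x) x \<in> A" using isc_c[OF x] unfolding isc_def by blast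
  show ?thesis
  proof (intro set_eqI iffI)
    fix p assume "p \<in> Tx x"
    then have i: "isc (\<phi> p x) (c x - p)" unfolding Tx_def by simp
    have "keyle (c x - p) (b - p)" if "b \<in> {v. \<phi> v x \<in> A}" for b
    proof -
      have "\<phi> (b - p + p) x \<in> A" using that by simp
      then show ?thesis using i unfolding isc_shift[OF x] by blast
    qed
    then show "p \<in> cell {v. \<phi> v x \<in> A} (c x)" unfolding cell_def by blast
  next
    fix p assume p: "p \<in> cell {v. \<phi> v x \<in> A} (c x)"
    have "keyle (c x - p) w'" if "\<phi> (w' + p) x \<in> A" for w'
    proof -
      have "keyle (c x - p) (w' + p - p)" using p that unfolding cell_def by blast
      then show ?thesis by simp
    qed
    then have "isc (\<phi> p x) (c x - p)" unfolding isc_shift[OF x] using cA by simp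
    then show "p \<in> Tx x" unfolding Tx_def by simp
  qed
qed

lemma T_sub: "x \<in> topspace X \<Longrightarrow> Tx x \<subseteq> {p. c x - p \<in> bxs (int CARD('n) * s)}"
  unfolding Tx_def using isc_bound maps by blast

lemma T_fin: "x \<in> topspace X \<Longrightarrow> finite (Tx x)"
proof -
  assume x: "x \<in> topspace X"
  have "Tx x \<subseteq> (\<lambda>v. c x - v) ` bxs (int CARD('n) * s)"
  proof
    fix p assume "p \<in> Tx x"
    then have "c x - p \<in> bxs (int CARD('n) * s)" using T_sub[OF x] by blast
    then show "p \<in> (\<lambda>v. c x - v) ` bxs (int CARD('n) * s)" by (rule rev_image_eqI) simp
  qed
  then show ?thesis using finite_subset finite_cube by blast
qed

lemma T_lower:
  assumes x: "x \<in> topspace X" and r: "r \<ge> 0" and sr: "s > (int CARD('n) + 1) * r"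
  shows "nat (2 * r + 1) ^ CARD('n) \<le> card (Tx x)"
proof -
  define D where "D = {v. \<phi> v x \<in> A}"
  have aD: "c x \<in> D" using isc_c[OF x] unfolding isc_def D_def by blast
  have sep: "b - c x \<notin> bxs s" if "b \<in> D" "b \<noteq> c x" for b
  proof
    assume bs: "b - c x \<in> bxs s"
    have "\<phi> (b - c x) (\<phi> (c x) x) \<in> A" using that actadd[OF x, of "b - c x" "c x"] unfolding D_def by simp
    moreover have "\<phi> (c x) x \<in> A" using aD unfolding D_def by simp
    ultimately show False using sepA bs that(2) by force
  qed
  have "(\<lambda>v. c x + v) ` bxs r \<subseteq> Tx x"
    unfolding T_cell[OF x] D_def[symmetric] by (rule cell_lower[OF aD sep r sr])
  then have "card ((\<lambda>v. c x + v) ` bxs r) \<le> card (Tx x)" using T_fin[OF x] by (rule card_mono[rotated])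
  moreover have "card ((\<lambda>v. c x + v) ` bxs r) = card (bxs r :: (int^'n) set)"
    by (rule card_image) (simp add: inj_on_def)
  moreover have "card (bxs r :: (int^'n) set) = nat (2 * r + 1) ^ CARD('n)" by (rule card_cube[OF r])
  ultimately show ?thesis by simp
qed

lemma T_dl:
  assumes x: "x \<in> topspace X" and \<sigma>: "\<sigma> = 1 \<or> \<sigma> = -1"
  shows "dl (Tx x) (ax i \<sigma>) \<le> nat (2 * (int CARD('n) * s) + 1) ^ (CARD('n) - 1)"
  unfolding dl_def
proof (rule runend_card[OF T_sub[OF x] _ _ \<sigma>])
  show "0 \<le> int CARD('n) * s" using s0 by simp
  fix p k j assume "p \<in> Tx x" "p + ax i k \<in> Tx x" "0 \<le> j \<and> j \<le> k \<or> k \<le> j \<and> j \<le> 0"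
  then show "p + ax i j \<in> Tx x" unfolding T_cell[OF x] by (rule cell_conv)
qed

lemma bnd:
  assumes x: "x \<in> topspace X" and F: "finite F" and CF: "fst ` C \<subseteq> F"
  shows "card (prod_fib \<phi> C K x - fib K x) \<le> (\<Sum>f\<in>F. dl (Tx x) f)"
proof -
  define B where "B = {f + q | f q. f\<in>F \<and> q\<in>Tx x}"
  have Beq: "B = (\<lambda>(f, q). f + q) ` (F \<times> Tx x)" unfolding B_def by auto
  have fB: "finite B" unfolding Beq using F T_fin[OF x] by simp
  have "prod_fib \<phi> C K x - fib K x \<subseteq> (\<lambda>q. (q, x)) ` (B - Tx x)"
  proof
    fix g assume g: "g \<in> prod_fib \<phi> C K x - fib K x"
    then obtain c0 k where g': "g = tg_mult c0 k" "c0 \<in> C" "k \<in> fib K x"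
      unfolding prod_fib_def by blast
    obtain q where kq: "k = (q, x)" "q \<in> Tx x" using g'(3) fibK[OF x] by blast
    have gq: "g = (fst c0 + q, x)" using g' kq by (simp add: tg_mult_def)
    have "fst c0 \<in> F" using CF g'(2) by blast
    then have "fst c0 + q \<in> B" unfolding B_def using kq by blast
    moreover have "fst c0 + q \<notin> Tx x" using g gq fibK[OF x] by auto
    ultimately show "g \<in> (\<lambda>q. (q, x)) ` (B - Tx x)" using gq by blast
  qed
  then have "card (prod_fib \<phi> C K x - fib K x) \<le> card ((\<lambda>q. (q, x)) ` (B - Tx x))"
    by (rule card_mono[rotated]) (use fB in simp)
  also have "\<dots> \<le> card (B - Tx x)" by (rule card_image_le) (use fB in simp)
  also have "\<dots> \<le> (\<Sum>f\<in>F. dl (Tx x) f)" unfolding B_def by (rule boundary_card[OF F T_fin[OF x]])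
  finally show ?thesis .
qed

end

lemma arith_aux:
  fixes N r :: int
  assumes "N \<ge> 1" "r \<ge> 0"
  shows "2 * (N * ((N + 1) * r + 1)) + 1 \<le> 4 * N * N * (2 * r + 1)"
proof -
  have h2: "N \<le> N * N" using assms by (simp add: mult_le_cancel_left1)
  have h1: "N * r \<le> N * N * r" using h2 assms by (intro mult_right_mono) auto
  have h3: "0 \<le> N * N * r" using assms by simp
  have "2 * (N * ((N + 1) * r + 1)) + 1 = 2 * (N * N * r) + 2 * (N * r) + 2 * N + 1"
    by (simp add: algebra_simps)
  also have "\<dots> \<le> 8 * (N * N * r) + 4 * (N * N)" using h1 h2 h3 assms by linarith
  also have "\<dots> = 4 * N * N * (2 * r + 1)" by (simp add: algebra_simps)
  finally show ?thesis .
qed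

theorem lemma6p3:
  fixes X :: "'a topology" and \<phi> :: "int ^ 'n \<Rightarrow> 'a \<Rightarrow> 'a"
  assumes "compact_space X" and "metrizable_space X" and "totally_disconnected_space X"
    and "homeo_action X \<phi>" and "free_action X \<phi>"
  shows "almost_finite_tg X \<phi>"
proof -
  have hd: "Hausdorff_space X" using assms(2) by (rule metrizable_imp_Hausdorff_space)
  interpret zact X \<phi> by unfold_locales (use assms hd in auto)
  show ?thesis unfolding almost_finite_tg_def
  proof (intro allI impI)
    fix C :: "((int^'n) \<times> 'a) set" and \<epsilon> :: real assume Ce: "compactin (tg_top X) C \<and> \<epsilon> > 0"
    define F where "F = fst ` C"
    have "compactin (discrete_topology UNIV) F"
      unfolding F_def using Ce continuous_map_fst unfolding tg_top_def by (blast intro: image_compactin)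
    then have fF: "finite F" by (simp add: compactin_discrete_topology)
    define N where "N = CARD('n)"
    have N1: "N \<ge> 1" unfolding N_def using finite_UNIV_card_ge_0[where 'a='n, OF finite_class.finite_UNIV] by simp
    define R0 where "R0 = (\<Sum>f\<in>F. \<Sum>i\<in>(UNIV::'n set). nat \<bar>f$i\<bar>)"
    define Q where "Q = card F * R0 * (4 * N * N) ^ (N - 1)"
    obtain m :: nat where m: "real Q / \<epsilon> < real m" using reals_Archimedean2 by blast
    define r where "r = int m"
    define s where "s = (int N + 1) * r + 1"
    have r0: "r \<ge> 0" unfolding r_def by simp
    have s0: "s \<ge> 0" unfolding s_def r_def by simp
    have sr: "s > (int CARD('n) + 1) * r" unfolding s_def N_def by simp
    obtain A where A0: "clopen A \<and> (\<forall>y\<in>A. \<forall>v\<in>bxs s. v \<noteq> 0 \<longrightarrow> \<phi> v y \<notin> A)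
      \<and> (\<forall>y\<in>topspace X. \<exists>v\<in>bxs s. \<phi> v y \<in> A)"
      using markers[OF s0] by (rule exE)
    have A: "clopen A" "\<And>y v. y \<in> A \<Longrightarrow> v \<in> bxs s \<Longrightarrow> v \<noteq> 0 \<Longrightarrow> \<phi> v y \<notin> A"
      "\<And>y. y \<in> topspace X \<Longrightarrow> \<exists>v\<in>bxs s. \<phi> v y \<in> A"
      using A0 by auto
    interpret zm: zmark X \<phi> A s
      by unfold_locales (fact s0, fact A(1), (rule A(2); assumption), (rule A(3); assumption))
    define M where "M = 2 * m + 1"
    have M: "nat (2 * r + 1) = M" unfolding M_def r_def by simp
    define E where "E = nat (2 * (int CARD('n) * s) + 1) ^ (CARD('n) - 1)"
    have EM: "E \<le> (4 * N * N) ^ (N - 1) * M ^ (N - 1)"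
    proof -
      have "2 * (int N * s) + 1 \<le> 4 * int N * int N * (2 * r + 1)"
        unfolding s_def using arith_aux[of "int N" r] N1 r0 by simp
      moreover have "4 * int N * int N * (2 * r + 1) = int (4 * N * N * M)" unfolding M_def r_def by (simp add: algebra_simps)
      ultimately have "2 * (int N * s) + 1 \<le> int (4 * N * N * M)" by simp
      then have "nat (2 * (int N * s) + 1) \<le> 4 * N * N * M" unfolding nat_le_iff .
      then have "nat (2 * (int N * s) + 1) ^ (N - 1) \<le> (4 * N * N * M) ^ (N - 1)"
        by (rule power_mono) simp
      then show ?thesis unfolding E_def N_def by (simp add: power_mult_distrib)
    qed
    show "\<exists>K. elementary_subgroupoid X \<phi> K \<and>
             (\<forall>x\<in>topspace X.
                real (card (prod_fib \<phi> C K x - fib K x)) / real (card (orbit_class \<phi> K x)) < \<epsilon>)"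
    proof (intro exI conjI ballI)
      show "elementary_subgroupoid X \<phi> zm.K" by (rule zm.K_elementary)
      fix x assume x: "x \<in> topspace X"
      have dlb: "dl (zm.Tx x) f \<le> (\<Sum>i\<in>UNIV. nat \<bar>f$i\<bar>) * E" for f
        unfolding E_def by (rule dl_vec[OF zm.T_fin[OF x]]) (rule zm.T_dl[OF x])
      have "card (prod_fib \<phi> C zm.K x - fib zm.K x) \<le> (\<Sum>f\<in>F. dl (zm.Tx x) f)"
        by (rule zm.bnd[OF x fF]) (simp add: F_def)
      also have "\<dots> \<le> (\<Sum>f\<in>F. R0 * E)"
      proof (rule sum_mono)
        fix f assume fF': "f \<in> F"
        have "(\<Sum>i\<in>UNIV. nat \<bar>f$i\<bar>) \<le> R0" unfolding R0_def
          by (rule member_le_sum[OF fF' _ fF]) simp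
        then show "dl (zm.Tx x) f \<le> R0 * E" using dlb[of f] by (meson le_trans mult_le_mono1)
      qed
      also have "\<dots> = card F * R0 * E" by simp
      also have "\<dots> \<le> card F * R0 * ((4 * N * N) ^ (N - 1) * M ^ (N - 1))"
        using EM by (intro mult_left_mono) auto
      also have "\<dots> = Q * M ^ (N - 1)" unfolding Q_def by (simp add: algebra_simps)
      finally have cB: "card (prod_fib \<phi> C zm.K x - fib zm.K x) \<le> Q * M ^ (N - 1)" .
      have cT: "M ^ N \<le> card (orbit_class \<phi> zm.K x)"
        using zm.T_lower[OF x r0 sr] zm.card_orb[OF x] M unfolding N_def by simp
      have MN: "M ^ N = M * M ^ (N - 1)" using N1 by (metis power_eq_if not_one_le_zero)
      have Mpos: "0 < M" unfolding M_def by simp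
      have "real (card (prod_fib \<phi> C zm.K x - fib zm.K x)) / real (card (orbit_class \<phi> zm.K x))
            \<le> real (Q * M ^ (N - 1)) / real (M ^ N)"
      proof (rule frac_le)
        show "real (card (prod_fib \<phi> C zm.K x - fib zm.K x)) \<le> real (Q * M ^ (N - 1))"
          using cB by (simp only: of_nat_le_iff)
        show "real (M ^ N) \<le> real (card (orbit_class \<phi> zm.K x))"
          using cT by (simp only: of_nat_le_iff)
        show "0 \<le> real (Q * M ^ (N - 1))" by simp
        show "0 < real (M ^ N)" using Mpos by simp
      qed
      also have "\<dots> = real Q / real M" unfolding MN using Mpos by simp
      also have "\<dots> < \<epsilon>"
      proof -
        have "real Q / \<epsilon> < real M" using m unfolding M_def by simp
        then have "real Q < \<epsilon> * real M" using Ce by (simp add: divide_less_eq mult.commute)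
        then show ?thesis using Mpos by (simp add: divide_less_eq)
      qed
      finally show "real (card (prod_fib \<phi> C zm.K x - fib zm.K x)) / real (card (orbit_class \<phi> zm.K x)) < \<epsilon>" .
    qed
  qed
qed

end
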